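(* Let $Q$ be a non-negative matrix on a countable set $S$ with finite Green's function and let $\nu$ be a $Q$-excessive measure with one-sided Kuznetsov measure $\mathcal K^\nu$. For every measurable set $A\subset\mathcal W$, $n\in\mathbb N$, $B\subset S^{n+1}$ and $x\in S$, $$\mathcal K^\nu\big((X_{m-n})_{m\in-\mathbb N_0}\in A,\ X_{-n}=x,\ (X_{-n},\dots,X_0)\in B\big)=\mathcal K^\nu(A\cap\{X_0=x\})\,\mathcal Q^x_n(B).$$
   Context: $Q=(q_{x,y})_{x,y\in S}$ non-negative with $G=\sum_{n\ge0}Q^n$ finite entrywise. A measure $\nu$ on $S$ finite at every point is $Q$-excessive if $\sum_y\nu(y)q_{y,x}\le\nu(x)$ for all $x$; $\nu^{\mathrm{pot}}(x)=\nu(x)-\sum_y\nu(y)q_{y,x}$. $\mathcal W$ is the set of sequences $(x_n)_{n\in-\mathbb N_0}\in(S\cup\{\partial\})^{-\mathbb N_0}$ ($\partial\notin S$) for which some $\alpha\in-\mathbb N_0\cup\{-\infty\}$ satisfies $x_n\in S\iff\alpha\le n$; $X_n$ are the coordinates; product σ-field. The one-sided Kuznetsov measure $\mathcal K^\nu$ is the measure on $\mathcal W$ with $\mathcal K^\nu(\{(\dots,\partial,x_{-k},\dots,x_0)\})=\nu^{\mathrm{pot}}(x_{-k})q_{x_{-k},x_{-k+1}}\cdots q_{x_{-1},x_0}$ and $\mathcal K^\nu(X_{-k}=x_{-k},\dots,X_0=x_0)=\nu(x_{-k})q_{x_{-k},x_{-k+1}}\cdots q_{x_{-1},x_0}$ for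 all $k\in\mathbb N$, $x_{-k},\dots,x_0\in S$. For $x\in S$ and $n\in\mathbb N_0$, $\mathcal Q^x_n$ is the measure on $S^{n+1}$ with $\mathcal Q^x_n(\{(x_0,\dots,x_n)\})=\mathbf 1_{\{x=x_0\}}q_{x_0,x_1}\cdots q_{x_{n-1},x_n}$. *)

theory Defs
  imports "HOL-Probability.Probability"
begin

text \<open>Paths indexed by -N_0: a path is a function nat => 'a option, where
  the value at k stands for X_{-k}, and None stands for the cemetery point.\<close>

definition W :: "(nat \<Rightarrow> 'a option) set" where
  "W = {\<omega>. (\<forall>k. \<omega> k \<noteq> None) \<or> (\<exists>N. \<forall>k. \<omega> k \<noteq> None \<longleftrightarrow> k \<le> N)}"

definition Wspace :: "(nat \<Rightarrow> 'a option) measure" where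
  "Wspace = restrict_space (Pi\<^sub>M UNIV (\<lambda>_. count_space UNIV)) W"

primrec qpow :: "('a \<Rightarrow> 'a \<Rightarrow> real) \<Rightarrow> nat \<Rightarrow> 'a \<Rightarrow> 'a \<Rightarrow> ennreal" where
  "qpow q 0 x y = (if x = y then 1 else 0)"
| "qpow q (Suc n) x y = (\<integral>\<^sup>+ z. qpow q n x z * ennreal (q z y) \<partial>count_space UNIV)"

definition green_finite :: "('a \<Rightarrow> 'a \<Rightarrow> real) \<Rightarrow> bool" where
  "green_finite q \<longleftrightarrow> (\<forall>x y. (\<Sum>n. qpow q n x y) \<noteq> \<infinity>)"

definition excessive :: "('a \<Rightarrow> 'a \<Rightarrow> real) \<Rightarrow> ('a \<Rightarrow> real) \<Rightarrow> bool" where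
  "excessive q \<nu> \<longleftrightarrow> (\<forall>x. 0 \<le> \<nu> x) \<and>
     (\<forall>x. (\<integral>\<^sup>+ y. ennreal (\<nu> y * q y x) \<partial>count_space UNIV) \<le> ennreal (\<nu> x))"

definition potpart :: "('a \<Rightarrow> 'a \<Rightarrow> real) \<Rightarrow> ('a \<Rightarrow> real) \<Rightarrow> 'a \<Rightarrow> ennreal" where
  "potpart q \<nu> x = ennreal (\<nu> x) - (\<integral>\<^sup>+ y. ennreal (\<nu> y * q y x) \<partial>count_space UNIV)"

definition pathweight :: "('a \<Rightarrow> 'a \<Rightarrow> real) \<Rightarrow> 'a list \<Rightarrow> ennreal" where
  "pathweight q xs = (\<Prod>i<length xs - 1. ennreal (q (xs ! i) (xs ! Suc i)))"

text \<open>One-sided Kuznetsov measure. A list xs = [x_{-k},...,x_0] (k = length xs - 1);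
  X_{-j} corresponds to rev xs ! j.\<close>
definition kuznetsov :: "('a \<Rightarrow> 'a \<Rightarrow> real) \<Rightarrow> ('a \<Rightarrow> real) \<Rightarrow> (nat \<Rightarrow> 'a option) measure \<Rightarrow> bool" where
  "kuznetsov q \<nu> K \<longleftrightarrow> sets K = sets Wspace \<and>
     (\<forall>xs. xs \<noteq> [] \<longrightarrow>
        emeasure K {\<omega> \<in> W. \<forall>j. \<omega> j = (if j < length xs then Some (rev xs ! j) else None)}
          = potpart q \<nu> (hd xs) * pathweight q xs) \<and>
     (\<forall>xs. xs \<noteq> [] \<longrightarrow>
        emeasure K {\<omega> \<in> W. \<forall>j < length xs. \<omega> j = Some (rev xs ! j)}
          = ennreal (\<nu> (hd xs)) * pathweight q xs)"

definition Qn :: "('a \<Rightarrow> 'a \<Rightarrow> real) \<Rightarrow> 'a \<Rightarrow> nat \<Rightarrow> 'a list set \<Rightarrow> ennreal" where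
  "Qn q x n B = (\<integral>\<^sup>+ xs. (if hd xs = x then pathweight q xs else 0)
                    \<partial>count_space {xs \<in> B. length xs = Suc n})"

end

theory Submission
  imports Defs
begin

lemma W_None_mono:
  assumes "\<omega> \<in> W" "\<omega> i = None" "i \<le> j" shows "\<omega> j = None"
proof -
  from assms(1) have "(\<forall>k. \<omega> k \<noteq> None) \<or> (\<exists>N. \<forall>k. \<omega> k \<noteq> None \<longleftrightarrow> k \<le> N)"
    unfolding W_def by simp
  then show ?thesis
  proof
    assume "\<forall>k. \<omega> k \<noteq> None" with assms(2) show ?thesis by simp
  next
    assume "\<exists>N. \<forall>k. \<omega> k \<noteq> None \<longleftrightarrow> k \<le> N"
    then obtain N where N: "\<And>k. \<omega> k \<noteq> None \<longleftrightarrow> k \<le> N" by blast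
    from N[of i] assms(2) have "\<not> i \<le> N" by simp
    with assms(3) have "\<not> j \<le> N" by simp
    with N[of j] show ?thesis by simp
  qed
qed

lemma W_0: "\<omega> \<in> W \<Longrightarrow> \<omega> 0 \<noteq> None"
  unfolding W_def by auto

lemma W_shift: "\<omega> \<in> W \<Longrightarrow> \<omega> n \<noteq> None \<Longrightarrow> (\<lambda>m. \<omega> (m + n)) \<in> W"
  unfolding W_def
proof (elim CollectE disjE exE)
  fix N assume N: "\<forall>k. (\<omega> k \<noteq> None) = (k \<le> N)" and "\<omega> n \<noteq> None"
  then have "n \<le> N" by auto
  then have "\<forall>k. (\<omega> (k+n) \<noteq> None) = (k \<le> N - n)" using N by auto
  then show "(\<lambda>m. \<omega> (m + n)) \<in> {\<omega>. (\<forall>k. \<omega> k \<noteq> None) \<or> (\<exists>N. \<forall>k. (\<omega> k \<noteq> None) = (k \<le> N))}" by auto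
qed auto

lemma pw_Nil: "pathweight q [] = 1" and pw_single: "pathweight q [a] = 1"
  by (auto simp: pathweight_def)

lemma pw_Cons2: "pathweight q (a # c # r) = ennreal (q a c) * pathweight q (c # r)"
  unfolding pathweight_def by (simp add: prod.lessThan_Suc_shift del: prod.lessThan_Suc)

lemma pw_append: "b \<noteq> [] \<Longrightarrow> pathweight q (us @ b) = pathweight q (us @ [hd b]) * pathweight q b"
proof (induction us)
  case Nil then show ?case by (simp add: pw_single)
next
  case (Cons a us)
  show ?case
  proof (cases us)
    case Nil
    with Cons.prems show ?thesis by (cases b) (auto simp: pw_Cons2 pw_single)
  next
    case (Cons c r)
    with Cons.IH Cons.prems show ?thesis by (simp add: pw_Cons2 mult.assoc)
  qed
qed

definition C :: "'a option list \<Rightarrow> (nat \<Rightarrow> 'a option) set" where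
  "C ys = {\<omega> \<in> W. \<forall>j<length ys. \<omega> j = ys ! j}"

lemma C_exact:
  assumes "set r \<subseteq> {None}"
  shows "C (map Some (rev xs) @ None # r) = {\<omega> \<in> W. \<forall>j. \<omega> j = (if j < length xs then Some (rev xs ! j) else None)}"
proof (intro equalityI subsetI)
  fix \<omega> assume w: "\<omega> \<in> C (map Some (rev xs) @ None # r)"
  then have wW: "\<omega> \<in> W" and h: "\<forall>j<length xs + Suc (length r). \<omega> j = (map Some (rev xs) @ None # r) ! j"
    by (auto simp: C_def)
  have a: "\<omega> j = Some (rev xs ! j)" if "j < length xs" for j
    using h[rule_format, of j] that by (simp add: nth_append)
  have b: "\<omega> (length xs) = None"
    using h[rule_format, of "length xs"] by (simp add: nth_append)
  show "\<omega> \<in> {\<omega> \<in> W. \<forall>j. \<omega> j = (if j < length xs then Some (rev xs ! j) else None)}"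
    using a W_None_mono[OF wW b] wW by auto
next
  fix \<omega> assume w: "\<omega> \<in> {\<omega> \<in> W. \<forall>j. \<omega> j = (if j < length xs then Some (rev xs ! j) else None)}"
  have "(map Some (rev xs) @ None # r) ! j = None" if "\<not> j < length xs" "j < length xs + Suc (length r)" for j
  proof -
    have "(map Some (rev xs) @ None # r) ! j = (None # r) ! (j - length xs)"
      using that by (simp add: nth_append)
    also have "\<dots> = None" using assms that
    proof (cases "j - length xs")
      case (Suc m)
      then have "m < length r" using that by simp
      then have "r ! m \<in> set r" by (rule nth_mem)
      then show ?thesis using Suc assms by auto
    qed simp
    finally show ?thesis .
  qed
  then show "\<omega> \<in> C (map Some (rev xs) @ None # r)" using w
    by (auto simp: C_def nth_append)
qed

lemma C_empty:
  assumes "Some y \<in> set r"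
  shows "C (map Some (rev xs) @ None # r) = {}"
proof (rule ccontr)
  assume "C (map Some (rev xs) @ None # r) \<noteq> {}"
  then obtain \<omega> where w: "\<omega> \<in> C (map Some (rev xs) @ None # r)" by blast
  then have wW: "\<omega> \<in> W" and h: "\<forall>j<length xs + Suc (length r). \<omega> j = (map Some (rev xs) @ None # r) ! j"
    by (auto simp: C_def)
  have b: "\<omega> (length xs) = None"
    using h[rule_format, of "length xs"] by (simp add: nth_append)
  obtain i where i: "i < length r" "r ! i = Some y" using assms by (metis in_set_conv_nth)
  have "\<omega> (length xs + Suc i) = Some y"
    using h[rule_format, of "length xs + Suc i"] i by (simp add: nth_append)
  with W_None_mono[OF wW b, of "length xs + Suc i"] show False by simp
qed

lemma K_C:
  assumes K: "kuznetsov q \<nu> K" and xs: "xs \<noteq> []" and rest: "rest = [] \<or> hd rest = None"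
  shows "emeasure K (C (map Some (rev xs) @ rest)) =
    (if rest = [] then ennreal (\<nu> (hd xs)) * pathweight q xs
     else if set rest \<subseteq> {None} then potpart q \<nu> (hd xs) * pathweight q xs else 0)"
proof (cases rest)
  case Nil
  have "C (map Some (rev xs) @ rest) = {\<omega> \<in> W. \<forall>j < length xs. \<omega> j = Some (rev xs ! j)}"
    using Nil by (auto simp: C_def)
  then show ?thesis using K xs Nil unfolding kuznetsov_def by simp
next
  case (Cons a r)
  with rest have a: "a = None" by simp
  show ?thesis
  proof (cases "set r \<subseteq> {None}")
    case True
    then show ?thesis using K xs Cons a C_exact[OF True, of xs] unfolding kuznetsov_def by simp
  next
    case False
    then obtain y where "Some y \<in> set r" by (metis insertI1 not_Some_eq subsetI)
    then show ?thesis using Cons a C_empty[of y r xs] False by simp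
  qed
qed

lemma K_key:
  assumes K: "kuznetsov q \<nu> K" and b: "b \<noteq> []"
  shows "emeasure K (C (map Some (rev b) @ t)) = emeasure K (C (Some (hd b) # t)) * pathweight q b"
proof -
  define zs where "zs = map the (takeWhile (\<lambda>v. v \<noteq> None) t)"
  define rest where "rest = dropWhile (\<lambda>v. v \<noteq> None) t"
  have t: "t = map Some zs @ rest"
  proof -
    have "map Some zs = takeWhile (\<lambda>v. v \<noteq> None) t"
      unfolding zs_def by (rule nth_equalityI) (auto dest!: nth_mem set_takeWhileD)
    then show ?thesis unfolding rest_def by simp
  qed
  have rest: "rest = [] \<or> hd rest = None"
    unfolding rest_def by (metis (mono_tags, lifting) hd_dropWhile)
  have e1: "map Some (rev b) @ t = map Some (rev (rev zs @ b)) @ rest" using t by simp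
  have e2: "Some (hd b) # t = map Some (rev (rev zs @ [hd b])) @ rest" using t by simp
  have hd: "hd (rev zs @ b) = hd (rev zs @ [hd b])" by (cases "rev zs") auto
  have pw: "pathweight q (rev zs @ b) = pathweight q (rev zs @ [hd b]) * pathweight q b"
    by (rule pw_append[OF b])
  have n1: "rev zs @ b \<noteq> []" "rev zs @ [hd b] \<noteq> []" using b by auto
  show ?thesis
    apply (subst e1, subst e2)
    apply (subst K_C[OF K n1(1) rest], subst K_C[OF K n1(2) rest])
    by (simp add: hd pw mult.assoc)
qed

abbreviation "PW \<equiv> (Pi\<^sub>M UNIV (\<lambda>_. count_space UNIV) :: (nat \<Rightarrow> 'a option) measure)"

lemma space_Wspace: "space Wspace = W"
  unfolding Wspace_def by (simp add: space_restrict_space space_PiM)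

lemma C_sets: "C ys \<in> sets Wspace"
proof -
  have "{\<omega>. \<forall>j<length ys. \<omega> j = ys ! j} \<in> sets PW"
  proof -
    have "{\<omega> \<in> space PW. \<forall>j<length ys. \<omega> j = ys ! j} \<in> sets PW" by measurable
    then show ?thesis by (simp add: space_PiM)
  qed
  moreover have "C ys = W \<inter> {\<omega>. \<forall>j<length ys. \<omega> j = ys ! j}" by (auto simp: C_def)
  ultimately show ?thesis unfolding Wspace_def sets_restrict_space by blast
qed

lemma C_Pow: "range C \<subseteq> Pow W" by (auto simp: C_def)

lemma sets_Wspace: "sets (Wspace :: (nat \<Rightarrow> 'a::countable option) measure) = sigma_sets W (range C)"
proof (rule equalityI)
  show "sigma_sets W (range C) \<subseteq> sets (Wspace :: (nat \<Rightarrow> 'a option) measure)"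
  proof -
    have "range C \<subseteq> sets (Wspace :: (nat \<Rightarrow> 'a option) measure)" using C_sets by auto
    from sets.sigma_sets_subset[OF this] show ?thesis by (metis space_Wspace)
  qed
next
  interpret S: sigma_algebra W "sigma_sets W (range C)"
    by (rule sigma_algebra_sigma_sets[OF C_Pow])
  have G: "sets (PW :: (nat \<Rightarrow> 'a option) measure) = sigma_sets UNIV {{f. f i \<in> A} | i A. True}"
    by (subst sets_PiM_single) (simp add: space_PiM)
  have "W \<inter> B \<in> sigma_sets W (range C)" if "B \<in> sigma_sets UNIV {{f. f i \<in> A} | i A. True}" for B :: "(nat \<Rightarrow> 'a option) set"
    using that
  proof induction
    case (Basic a)
    then obtain i A where a: "a = {f. f i \<in> A}" by blast
    have "W \<inter> a = \<Union> (C ` {ys. length ys = Suc i \<and> ys ! i \<in> A})"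
    proof (intro equalityI subsetI)
      fix \<omega> assume w: "\<omega> \<in> W \<inter> a"
      have "\<omega> \<in> C (map \<omega> [0..<Suc i])" using w by (auto simp: C_def simp del: upt_Suc)
      moreover have "map \<omega> [0..<Suc i] \<in> {ys. length ys = Suc i \<and> ys ! i \<in> A}"
        using w a by (simp del: upt_Suc)
      ultimately show "\<omega> \<in> \<Union> (C ` {ys. length ys = Suc i \<and> ys ! i \<in> A})" by blast
    qed (auto simp: C_def a)
    also have "\<dots> \<in> sigma_sets W (range C)"
    proof (rule S.countable_Union)
      have "countable {ys :: 'a option list. length ys = Suc i \<and> ys ! i \<in> A}" by (rule countableI_type)
      then show "countable (C ` {ys. length ys = Suc i \<and> ys ! i \<in> A})" by (rule countable_image)
    qed auto
    finally show ?case .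
  next
    case Empty then show ?case by simp
  next
    case (Compl a)
    have "W \<inter> (UNIV - a) = W - (W \<inter> a)" by blast
    then show ?case using Compl by (simp add: S.Diff)
  next
    case (Union a)
    have "W \<inter> \<Union> (range a) = (\<Union>i. W \<inter> a i)" by blast
    moreover have "(\<Union>i. W \<inter> a i) \<in> sigma_sets W (range C)"
      using Union by (intro S.countable_UN) auto
    ultimately show ?case by simp
  qed
  note IH = this
  show "sets (Wspace :: (nat \<Rightarrow> 'a option) measure) \<subseteq> sigma_sets W (range C)"
  proof
    fix x :: "(nat \<Rightarrow> 'a option) set" assume "x \<in> sets Wspace"
    then obtain B where B: "B \<in> sets PW" "x = W \<inter> B"
      unfolding Wspace_def sets_restrict_space by auto
    from B(1) have "B \<in> sigma_sets UNIV {{f. f i \<in> A} | i A. True}" by (simp only: G)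
    then show "x \<in> sigma_sets W (range C)" using IH B(2) by blast
  qed
qed

lemma C_Int_stable: "Int_stable (range (C :: 'a option list \<Rightarrow> _))"
  unfolding Int_stable_def
proof (intro ballI)
  fix a b :: "(nat \<Rightarrow> 'a option) set" assume "a \<in> range C" "b \<in> range C"
  then obtain ys zs where a: "a = C ys" and b: "b = C zs" by auto
  show "a \<inter> b \<in> range C"
  proof (cases "a \<inter> b = {}")
    case True
    have "C [None] = {}" by (auto simp: C_def dest: W_0)
    then show ?thesis using True by (metis rangeI)
  next
    case False
    then obtain \<omega>0 where w0: "\<omega>0 \<in> C ys" "\<omega>0 \<in> C zs" using a b by auto
    show ?thesis
    proof (cases "length ys \<le> length zs")
      case True
      have "C ys \<inter> C zs = C zs" using w0 True by (auto simp: C_def)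
      then show ?thesis using a b by auto
    next
      case False
      have "C ys \<inter> C zs = C ys" using w0 False by (auto simp: C_def)
      then show ?thesis using a b by auto
    qed
  qed
qed

lemma C_iff: "\<omega> \<in> C ys \<longleftrightarrow> \<omega> \<in> W \<and> (\<forall>j<length ys. \<omega> j = ys ! j)"
  by (simp add: C_def)

lemma revb_n: "length b = Suc n \<Longrightarrow> rev b ! n = hd b"
  by (cases b) (auto simp: nth_append)

lemma preimage_C_Cons:
  assumes lb: "length b = Suc n"
  shows "(\<lambda>\<omega> m. \<omega> (m + n)) -` C (Some (hd b) # t) \<inter> C (map Some (rev b)) = C (map Some (rev b) @ t)"
proof (intro equalityI subsetI)
  fix \<omega> assume w: "\<omega> \<in> (\<lambda>\<omega> m. \<omega> (m + n)) -` C (Some (hd b) # t) \<inter> C (map Some (rev b))"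
  then have w1: "(\<lambda>m. \<omega> (m + n)) \<in> C (Some (hd b) # t)" and w2: "\<omega> \<in> C (map Some (rev b))" by auto
  from w2 have wW: "\<omega> \<in> W" and e0: "\<forall>j<length (map Some (rev b)). \<omega> j = map Some (rev b) ! j"
    unfolding C_iff by blast+
  from w1 have s: "\<forall>j<length (Some (hd b) # t). \<omega> (j + n) = (Some (hd b) # t) ! j"
    unfolding C_iff by simp
  have "\<omega> j = (map Some (rev b) @ t) ! j" if j: "j < length (map Some (rev b) @ t)" for j
  proof (cases "j < Suc n")
    case True
    then have jl: "j < length (map Some (rev b))" using lb by simp
    then have "\<omega> j = map Some (rev b) ! j" by (rule e0[rule_format])
    also have "\<dots> = (map Some (rev b) @ t) ! j" using jl by (simp only: nth_append if_True)
    finally show ?thesis .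
  next
    case False
    define i where "i = j - Suc n"
    have ji: "j = Suc i + n" using False unfolding i_def by simp
    have il: "Suc i < length (Some (hd b) # t)" using j ji lb by simp
    have "\<omega> (Suc i + n) = (Some (hd b) # t) ! Suc i" by (rule s[rule_format, OF il])
    also have "\<dots> = t ! i" by simp
    also have "\<dots> = (map Some (rev b) @ t) ! j" using ji lb by (simp add: nth_append)
    finally show ?thesis using ji by simp
  qed
  then show "\<omega> \<in> C (map Some (rev b) @ t)" using wW unfolding C_iff by (intro conjI allI impI) auto
next
  fix \<omega> assume w: "\<omega> \<in> C (map Some (rev b) @ t)"
  from w have wW: "\<omega> \<in> W" and h: "\<forall>j<length (map Some (rev b) @ t). \<omega> j = (map Some (rev b) @ t) ! j"
    unfolding C_iff by blast+
  have e: "\<omega> j = map Some (rev b) ! j" if j: "j < length (map Some (rev b))" for j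
  proof -
    have "j < length (map Some (rev b) @ t)" using j by simp
    then have "\<omega> j = (map Some (rev b) @ t) ! j" by (rule h[rule_format])
    also have "\<dots> = map Some (rev b) ! j" using j by (simp only: nth_append if_True)
    finally show ?thesis .
  qed
  have wn: "\<omega> n = Some (hd b)"
  proof -
    have "n < length (map Some (rev b))" using lb by simp
    then have "\<omega> n = map Some (rev b) ! n" by (rule e)
    also have "\<dots> = Some (rev b ! n)" using lb by simp
    also have "\<dots> = Some (hd b)" using revb_n[OF lb] by simp
    finally show ?thesis .
  qed
  have s: "\<omega> (j + n) = (Some (hd b) # t) ! j" if j: "j < length (Some (hd b) # t)" for j
  proof (cases j)
    case 0 then show ?thesis using wn by simp
  next
    case (Suc i)
    have jl: "j + n < length (map Some (rev b) @ t)" using j lb by simp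
    then have "\<omega> (j + n) = (map Some (rev b) @ t) ! (j + n)" by (rule h[rule_format])
    also have "\<dots> = t ! i" using Suc lb by (simp add: nth_append)
    also have "\<dots> = (Some (hd b) # t) ! j" using Suc by simp
    finally show ?thesis .
  qed
  have sW: "(\<lambda>m. \<omega> (m + n)) \<in> W" using W_shift[OF wW] wn by simp
  have c1: "(\<lambda>m. \<omega> (m + n)) \<in> C (Some (hd b) # t)" unfolding C_iff using sW s by (intro conjI allI impI) auto
  have c2: "\<omega> \<in> C (map Some (rev b))" unfolding C_iff using wW e by (intro conjI allI impI) auto
  show "\<omega> \<in> (\<lambda>\<omega> m. \<omega> (m + n)) -` C (Some (hd b) # t) \<inter> C (map Some (rev b))"
    using c1 c2 by simp
qed

lemma preimage_C_Nil:
  assumes lb: "length b = Suc n"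
  shows "(\<lambda>\<omega> m. \<omega> (m + n)) -` C [] \<inter> C (map Some (rev b)) = C (map Some (rev b) @ [])"
proof -
  have "\<omega> n = Some (hd b)" if "\<omega> \<in> C (map Some (rev b))" for \<omega>
    using that revb_n[OF lb] lb by (auto simp: C_iff)
  then have "(\<lambda>m. \<omega> (m + n)) \<in> W" if "\<omega> \<in> C (map Some (rev b))" for \<omega>
    using that W_shift by (auto simp: C_iff)
  then show ?thesis by (auto simp: C_iff)
qed

lemma preimage_C_other:
  assumes lb: "length b = Suc n" and y: "y \<noteq> Some (hd b)"
  shows "(\<lambda>\<omega> m. \<omega> (m + n)) -` C (y # t) \<inter> C (map Some (rev b)) = {}"
proof -
  have "\<omega> n = Some (hd b)" if "\<omega> \<in> C (map Some (rev b))" for \<omega>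
    using that revb_n[OF lb] lb by (auto simp: C_iff)
  moreover have "\<omega> n = y" if "(\<lambda>m. \<omega> (m + n)) \<in> C (y # t)" for \<omega>
    using that by (auto simp: C_iff)
  ultimately show ?thesis using y by blast
qed

lemma C_Int_head: "C (Some h # t) \<inter> C [Some h] = C (Some h # t)" "C [] \<inter> C [Some h] = C [Some h]"
  "y \<noteq> Some h \<Longrightarrow> C (y # t) \<inter> C [Some h] = {}"
  by (auto simp: C_iff)

lemma single:
  fixes q :: "'a::countable \<Rightarrow> 'a \<Rightarrow> real" and K :: "(nat \<Rightarrow> 'a option) measure"
  assumes K: "kuznetsov q \<nu> K" and A: "A \<in> sets Wspace" and lb: "length b = Suc n"
  shows "(\<lambda>\<omega> m. \<omega> (m + n)) -` A \<inter> C (map Some (rev b)) \<in> sets K"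
    and "emeasure K ((\<lambda>\<omega> m. \<omega> (m + n)) -` A \<inter> C (map Some (rev b)))
       = emeasure K (A \<inter> C [Some (hd b)]) * pathweight q b"
proof -
  define T where "T = (\<lambda>(\<omega>::nat \<Rightarrow> 'a option) m. \<omega> (m + n))"
  define E where "E = C (map Some (rev b))"
  have sK: "sets K = sets Wspace" using K by (simp add: kuznetsov_def)
  have spK: "space K = W" using sets_eq_imp_space_eq[OF sK] space_Wspace by simp
  have E: "E \<in> sets K" unfolding E_def sK by (rule C_sets)
  have EW: "E \<subseteq> W" by (auto simp: E_def C_iff)
  have spR: "space (restrict_space K E) = E" using EW spK by (auto simp: space_restrict_space)
  have TE: "T \<omega> \<in> W" if "\<omega> \<in> E" for \<omega>
  proof -
    have "\<omega> n = Some (rev b ! n)" "\<omega> \<in> W" using that lb by (auto simp: E_def C_iff)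
    then show ?thesis unfolding T_def by (intro W_shift) auto
  qed
  have Tm0: "T \<in> measurable PW PW"
    unfolding T_def by (rule measurable_PiM_single') (auto simp: space_PiM)
  have Tm: "T \<in> measurable (restrict_space K E) Wspace"
    unfolding Wspace_def
  proof (rule measurable_restrict_space2)
    show "T \<in> space (restrict_space K E) \<rightarrow> W" using TE spR by auto
    have "T \<in> measurable Wspace PW" unfolding Wspace_def by (rule measurable_restrict_space1[OF Tm0])
    then have "T \<in> measurable K PW" using measurable_cong_sets[OF sK refl] by blast
    then show "T \<in> measurable (restrict_space K E) PW" by (rule measurable_restrict_space1)
  qed
  have pre: "T -` A' \<inter> E \<in> sets K" if "A' \<in> sets Wspace" for A'
  proof -
    have "T -` A' \<inter> space (restrict_space K E) \<in> sets (restrict_space K E)"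
      using measurable_sets[OF Tm that] .
    moreover have "E \<inter> space K \<in> sets K" using E EW spK by (simp add: Int_absorb2)
    ultimately show ?thesis using spR by (simp add: sets_restrict_space_iff)
  qed
  then show "(\<lambda>\<omega> m. \<omega> (m + n)) -` A \<inter> C (map Some (rev b)) \<in> sets K"
    using A unfolding T_def E_def .
  define M1 where "M1 = distr (restrict_space K E) Wspace T"
  define X where "X = C [Some (hd b)]"
  have X: "X \<in> sets K" unfolding X_def sK by (rule C_sets)
  define M2 where "M2 = density K (\<lambda>\<omega>. pathweight q b * indicator X \<omega>)"
  have eM1: "emeasure M1 A' = emeasure K (T -` A' \<inter> E)" if "A' \<in> sets Wspace" for A'
  proof -
    have "emeasure M1 A' = emeasure (restrict_space K E) (T -` A' \<inter> E)"
      unfolding M1_def using that Tm spR by (simp add: emeasure_distr)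
    also have "\<dots> = emeasure K (T -` A' \<inter> E)"
      using E EW spK by (intro emeasure_restrict_space) (auto simp: Int_absorb2)
    finally show ?thesis .
  qed
  have eM2: "emeasure M2 A' = emeasure K (A' \<inter> X) * pathweight q b" if "A' \<in> sets Wspace" for A'
  proof -
    have "emeasure M2 A' = (\<integral>\<^sup>+ \<omega>. pathweight q b * indicator (A' \<inter> X) \<omega> \<partial>K)"
      unfolding M2_def using that X sK
      by (subst emeasure_density) (auto intro!: nn_integral_cong simp: indicator_def)
    also have "\<dots> = pathweight q b * emeasure K (A' \<inter> X)"
      using that X sK by (subst nn_integral_cmult_indicator) auto
    finally show ?thesis by (simp add: mult.commute)
  qed
  have gen: "emeasure M1 (C ys) = emeasure M2 (C ys)" for ys
  proof -
    have "emeasure M1 (C ys) = emeasure K (T -` C ys \<inter> E)" by (rule eM1[OF C_sets])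
    moreover have "emeasure M2 (C ys) = emeasure K (C ys \<inter> X) * pathweight q b" by (rule eM2[OF C_sets])
    moreover have "emeasure K (T -` C ys \<inter> E) = emeasure K (C ys \<inter> X) * pathweight q b"
    proof (cases ys)
      case Nil
      have b0: "b \<noteq> []" using lb by auto
      show ?thesis unfolding Nil T_def E_def X_def preimage_C_Nil[OF lb] C_Int_head
        using K_key[OF K b0, of "[]"] by simp
    next
      case (Cons y t)
      show ?thesis
      proof (cases "y = Some (hd b)")
        case True
        have b0: "b \<noteq> []" using lb by auto
        show ?thesis unfolding Cons True T_def E_def X_def preimage_C_Cons[OF lb] C_Int_head
          using K_key[OF K b0, of t] by simp
      next
        case False
        show ?thesis unfolding Cons T_def E_def X_def preimage_C_other[OF lb False] C_Int_head(3)[OF False]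
          by simp
      qed
    qed
    ultimately show ?thesis by simp
  qed
  have fin: "emeasure M1 a \<noteq> \<infinity>" if "a \<in> range (\<lambda>v. C [v])" for a
  proof -
    have "emeasure M1 a = emeasure K (T -` a \<inter> E)" using that by (auto intro: eM1 C_sets)
    also have "\<dots> \<le> emeasure K E" using E by (intro emeasure_mono) auto
    also have "\<dots> = ennreal (\<nu> (hd b)) * pathweight q b"
    proof -
      have "b \<noteq> []" using lb by auto
      then show ?thesis unfolding E_def using K_C[OF K, of b "[]"] by simp
    qed
    also have "\<dots> < \<infinity>"
    proof -
      have "pathweight q b \<noteq> \<top>" unfolding pathweight_def by (simp add: ennreal_prod_eq_top)
      then show ?thesis by (simp add: ennreal_mult_less_top top.not_eq_extremum)
    qed
    finally show ?thesis by simp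
  qed
  have "M1 = M2"
  proof (rule measure_eqI_generator_eq_countable[OF C_Int_stable C_Pow _ _ _ _ _ _ fin])
    show "emeasure M1 X' = emeasure M2 X'" if "X' \<in> range C" for X' using that gen by auto
    show "sets M1 = sigma_sets W (range C)" unfolding M1_def by (simp add: sets_Wspace)
    show "sets M2 = sigma_sets W (range C)" unfolding M2_def using sK by (simp add: sets_Wspace)
    show "range (\<lambda>v. C [v]) \<subseteq> range C" by auto
    show "\<Union> (range (\<lambda>v. C [v])) = W" by (auto simp: C_iff)
    show "countable (range (\<lambda>v::'a option. C [v]))" by (intro countable_image countableI_type)
  qed
  then have "emeasure M1 A = emeasure M2 A" by simp
  then show "emeasure K ((\<lambda>\<omega> m. \<omega> (m + n)) -` A \<inter> C (map Some (rev b)))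
       = emeasure K (A \<inter> C [Some (hd b)]) * pathweight q b"
    using eM1[OF A] eM2[OF A] unfolding T_def E_def X_def by simp
qed

lemma S1:
  fixes A :: "(nat \<Rightarrow> 'a option) set" and B :: "'a list set"
  assumes lB: "\<And>b. b \<in> B \<Longrightarrow> length b = Suc n"
  and T_def: "T = (\<lambda>(\<omega>::nat \<Rightarrow> 'a option) m. \<omega> (m + n))"
  and Xb_def: "\<And>b. Xb b = (if hd b = x then T -` A \<inter> C (map Some (rev b)) else {})"
  shows "\<omega> \<in> {\<omega> \<in> W. (\<lambda>m. \<omega> (m + n)) \<in> A \<and> \<omega> n = Some x \<and>
            rev (map (\<lambda>j. the (\<omega> j)) [0..<Suc n]) \<in> B} \<Longrightarrow> \<omega> \<in> \<Union> (Xb ` B)"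
proof -
    assume w: "\<omega> \<in> {\<omega> \<in> W. (\<lambda>m. \<omega> (m + n)) \<in> A \<and> \<omega> n = Some x \<and>
            rev (map (\<lambda>j. the (\<omega> j)) [0..<Suc n]) \<in> B}"
    define b where "b = rev (map (\<lambda>j. the (\<omega> j)) [0..<Suc n])"
    have wW: "\<omega> \<in> W" and wA: "T \<omega> \<in> A" and wn: "\<omega> n = Some x" and bB: "b \<in> B"
      using w by (auto simp: b_def T_def)
    have rb: "rev b = map (\<lambda>j. the (\<omega> j)) [0..<Suc n]" by (simp add: b_def)
    have some: "\<omega> j = Some (rev b ! j)" if "j < Suc n" for j
    proof -
      have "\<omega> j \<noteq> None" using W_None_mono[OF wW, of j n] wn that by auto
      moreover have "rev b ! j = the (\<omega> j)" using that unfolding rb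
        by (simp add: nth_map_upt del: upt_Suc)
      ultimately show ?thesis by auto
    qed
    have lb: "length b = Suc n" by (simp add: b_def)
    have hb: "hd b = x" using some[of n] revb_n[OF lb] wn by simp
    have "\<omega> \<in> Xb b" unfolding Xb_def using hb wA wW some lb by (simp add: C_iff)
    then show "\<omega> \<in> \<Union> (Xb ` B)" using bB by blast
qed

lemma S2:
  fixes A :: "(nat \<Rightarrow> 'a option) set" and B :: "'a list set"
  assumes lB: "\<And>b. b \<in> B \<Longrightarrow> length b = Suc n"
  and T_def: "T = (\<lambda>(\<omega>::nat \<Rightarrow> 'a option) m. \<omega> (m + n))"
  and Xb_def: "\<And>b. Xb b = (if hd b = x then T -` A \<inter> C (map Some (rev b)) else {})"
  shows "\<omega> \<in> \<Union> (Xb ` B) \<Longrightarrow> \<omega> \<in> {\<omega> \<in> W. (\<lambda>m. \<omega> (m + n)) \<in> A \<and> \<omega> n = Some x \<and>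
            rev (map (\<lambda>j. the (\<omega> j)) [0..<Suc n]) \<in> B}"
proof -
    assume "\<omega> \<in> \<Union> (Xb ` B)"
    then obtain b where bB: "b \<in> B" and wb: "\<omega> \<in> Xb b" by blast
    have lb: "length b = Suc n" using lB[OF bB] .
    have hb: "hd b = x"
    proof (rule ccontr)
      assume "hd b \<noteq> x"
      then have "Xb b = {}" by (simp add: Xb_def)
      with wb show False by blast
    qed
    have "Xb b = T -` A \<inter> C (map Some (rev b))" by (simp add: Xb_def hb)
    with wb have wA: "T \<omega> \<in> A" and wC: "\<omega> \<in> C (map Some (rev b))" by blast+
    have Cw: "\<omega> \<in> W \<and> (\<forall>j<length (map Some (rev b)). \<omega> j = map Some (rev b) ! j)"
      using wC unfolding C_iff .
    then have wW: "\<omega> \<in> W" by blast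
    have some: "\<forall>j<Suc n. \<omega> j = Some (rev b ! j)"
    proof (intro allI impI)
      fix j assume j: "j < Suc n"
      then have "j < length (map Some (rev b))" using lb by simp
      then have "\<omega> j = map Some (rev b) ! j" using Cw[THEN conjunct2, rule_format] by simp
      also have "\<dots> = Some (rev b ! j)" using j lb by simp
      finally show "\<omega> j = Some (rev b ! j)" .
    qed
    have "\<omega> n = Some (rev b ! n)" using some[rule_format, of n] by simp
    then have wn: "\<omega> n = Some x" using revb_n[OF lb] hb by simp
    have "map (\<lambda>j. the (\<omega> j)) [0..<Suc n] = rev b"
    proof (rule nth_equalityI)
      show "length (map (\<lambda>j. the (\<omega> j)) [0..<Suc n]) = length (rev b)" using lb by simp
      fix i assume "i < length (map (\<lambda>j. the (\<omega> j)) [0..<Suc n])"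
      then have i: "i < Suc n" by simp
      then have "map (\<lambda>j. the (\<omega> j)) [0..<Suc n] ! i = the (\<omega> i)"
        by (simp add: nth_map_upt del: upt_Suc)
      also have "\<dots> = rev b ! i" using some i by simp
      finally show "map (\<lambda>j. the (\<omega> j)) [0..<Suc n] ! i = rev b ! i" .
    qed
    then have eqb: "rev (map (\<lambda>j. the (\<omega> j)) [0..<Suc n]) = b" by (simp only: rev_rev_ident)
    have "rev (map (\<lambda>j. the (\<omega> j)) [0..<Suc n]) \<in> B" by (simp only: eqb bB)
    then show "\<omega> \<in> {\<omega> \<in> W. (\<lambda>m. \<omega> (m + n)) \<in> A \<and> \<omega> n = Some x \<and>
            rev (map (\<lambda>j. the (\<omega> j)) [0..<Suc n]) \<in> B}"
      using wW wA wn unfolding T_def by blast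
qed

theorem mainTheorem8:
  fixes q :: "'a::countable \<Rightarrow> 'a \<Rightarrow> real"
    and \<nu> :: "'a \<Rightarrow> real"
    and K :: "(nat \<Rightarrow> 'a option) measure"
    and A :: "(nat \<Rightarrow> 'a option) set"
    and n :: nat and B :: "'a list set" and x :: 'a
  assumes "\<forall>y z. 0 \<le> q y z"
    and "green_finite q"
    and "excessive q \<nu>"
    and "kuznetsov q \<nu> K"
    and "A \<in> sets Wspace"
    and "1 \<le> n"
    and "B \<subseteq> {xs. length xs = Suc n}"
  shows "emeasure K {\<omega> \<in> W. (\<lambda>m. \<omega> (m + n)) \<in> A \<and> \<omega> n = Some x \<and>
            rev (map (\<lambda>j. the (\<omega> j)) [0..<Suc n]) \<in> B}
         = emeasure K (A \<inter> {\<omega> \<in> W. \<omega> 0 = Some x}) * Qn q x n B"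
proof -
  note K = assms(4) and Am = assms(5) and Bl = assms(7)
  define T where "T = (\<lambda>(\<omega>::nat \<Rightarrow> 'a option) m. \<omega> (m + n))"
  define Xb where "Xb b = (if hd b = x then T -` A \<inter> C (map Some (rev b)) else {})" for b
  have lB: "length b = Suc n" if "b \<in> B" for b using that Bl by auto
  have Xb_eq: "\<And>b. Xb b = (if hd b = x then T -` A \<inter> C (map Some (rev b)) else {})"
    by (simp add: Xb_def)
  have S: "{\<omega> \<in> W. (\<lambda>m. \<omega> (m + n)) \<in> A \<and> \<omega> n = Some x \<and>
            rev (map (\<lambda>j. the (\<omega> j)) [0..<Suc n]) \<in> B} = \<Union> (Xb ` B)"
  proof (intro equalityI subsetI)
    fix \<omega> assume "\<omega> \<in> {\<omega> \<in> W. (\<lambda>m. \<omega> (m + n)) \<in> A \<and> \<omega> n = Some x \<and>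
            rev (map (\<lambda>j. the (\<omega> j)) [0..<Suc n]) \<in> B}"
    then show "\<omega> \<in> \<Union> (Xb ` B)" using S1[OF lB T_def Xb_eq] by blast
  next
    fix \<omega> assume "\<omega> \<in> \<Union> (Xb ` B)"
    then show "\<omega> \<in> {\<omega> \<in> W. (\<lambda>m. \<omega> (m + n)) \<in> A \<and> \<omega> n = Some x \<and>
            rev (map (\<lambda>j. the (\<omega> j)) [0..<Suc n]) \<in> B}" using S2[OF lB T_def Xb_eq] by blast
  qed
  have Xs: "Xb b \<in> sets K" if "b \<in> B" for b
    unfolding Xb_def T_def using single(1)[OF K Am lB[OF that]] by simp
  have disj: "disjoint_family_on Xb B"
    unfolding disjoint_family_on_def
  proof (intro ballI impI)
    fix b b' assume bB: "b \<in> B" and bB': "b' \<in> B" and ne: "b \<noteq> b'"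
    show "Xb b \<inter> Xb b' = {}"
    proof (rule ccontr)
      assume "Xb b \<inter> Xb b' \<noteq> {}"
      have sub: "Xb c \<subseteq> C (map Some (rev c))" for c by (simp add: Xb_def)
      from \<open>Xb b \<inter> Xb b' \<noteq> {}\<close> obtain \<omega> where "\<omega> \<in> Xb b" "\<omega> \<in> Xb b'" by blast
      then have "\<omega> \<in> C (map Some (rev b))" "\<omega> \<in> C (map Some (rev b'))" using sub by blast+
      then have "\<forall>j<Suc n. \<omega> j = Some (rev b ! j)" "\<forall>j<Suc n. \<omega> j = Some (rev b' ! j)"
        using lB[OF bB] lB[OF bB'] by (auto simp: C_iff)
      then have "rev b = rev b'"
        by (intro nth_equalityI) (auto simp: lB[OF bB] lB[OF bB'])
      with ne show False by simp
    qed
  qed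
  have cB: "countable B" by (rule countableI_type)
  have X0: "{\<omega> \<in> W. \<omega> 0 = Some x} = C [Some x]" by (auto simp: C_iff)
  have eX: "emeasure K (Xb b) = emeasure K (A \<inter> C [Some x]) * (if hd b = x then pathweight q b else 0)"
    if "b \<in> B" for b
    using single(2)[OF K Am lB[OF that]] by (auto simp: Xb_def T_def)
  have "emeasure K (\<Union> (Xb ` B)) = (\<integral>\<^sup>+ b. emeasure K (Xb b) \<partial>count_space B)"
    by (rule emeasure_UN_countable[OF Xs cB disj])
  also have "\<dots> = (\<integral>\<^sup>+ b. emeasure K (A \<inter> C [Some x]) * (if hd b = x then pathweight q b else 0) \<partial>count_space B)"
    by (rule nn_integral_cong) (simp add: eX)
  also have "\<dots> = emeasure K (A \<inter> C [Some x]) * (\<integral>\<^sup>+ b. (if hd b = x then pathweight q b else 0) \<partial>count_space B)"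
    by (rule nn_integral_cmult) simp
  also have "(\<integral>\<^sup>+ b. (if hd b = x then pathweight q b else 0) \<partial>count_space B) = Qn q x n B"
  proof -
    have "{xs \<in> B. length xs = Suc n} = B" using Bl by auto
    then show ?thesis unfolding Qn_def by simp
  qed
  finally show ?thesis unfolding S X0 .
qed

end
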